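(* Let $X$ be a random variable in $[0,1]$ with mean $\mu\in(0,1)$ and variance $\sigma^2$, and let $g(\mu)=\max\{\mu,1-\mu\}$. Then \[ \mathbb{E}[\psi_E(|X-\mu|)]\le\sigma^2\,\frac{\psi_E(g(\mu))}{g(\mu)^2}. \] Moreover, this constant is sharp: for each $\mu\in(0,1)$, \[ \sup\left\{\frac{\mathbb{E}[\psi_E(|X-\mu|)]}{\operatorname{Var}(X)}\right\}=\frac{\psi_E(g(\mu))}{g(\mu)^2}, \] where the supremum is over all non-degenerate random variables $X\in[0,1]$ with $\mathbb{E}X=\mu$.
   Context: $\psi_E(x)=-\log(1-x)-x$ for $x\in[0,1)$. *)

theory Defs
  imports "HOL-Probability.Probability"
begin

definition psiE :: "real \<Rightarrow> real" where
  "psiE x = - ln (1 - x) - x"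

definition gmu :: "real \<Rightarrow> real" where
  "gmu \<mu> = max \<mu> (1 - \<mu>)"

end

theory Submission
  imports Defs
begin


lemma m_nonneg:
  fixes t :: real assumes "0 \<le> t" "t < 1"
  shows "0 \<le> t\<^sup>2/(1-t) + 2 * ln (1-t) + 2*t"
proof -
  let ?m = "\<lambda>x::real. x\<^sup>2/(1-x) + 2 * ln (1-x) + 2*x"
  have "?m 0 \<le> ?m t"
  proof (rule DERIV_nonneg_imp_nondecreasing[OF assms(1)])
    fix x :: real assume x: "0 \<le> x" "x \<le> t"
    then have x1: "x < 1" using assms by auto
    have "DERIV ?m x :> (2*x*(1-x) + x\<^sup>2)/(1-x)\<^sup>2 + 2*(-1/(1-x)) + 2"
      using x1 by (auto intro!: derivative_eq_intros simp: field_simps power2_eq_square)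
    moreover have ne: "1 - x \<noteq> 0" using x1 by auto
    moreover have "(2*x*(1-x) + x\<^sup>2)/(1-x)\<^sup>2 + 2*(-1/(1-x)) + 2 = x\<^sup>2/(1-x)\<^sup>2"
      using ne by (simp add: divide_simps) (simp add: algebra_simps power2_eq_square)
    ultimately show "\<exists>y. DERIV ?m x :> y \<and> y \<ge> 0" by auto
  qed
  then show ?thesis by simp
qed

lemma psi_ratio_mono:
  fixes t g :: real assumes "0 < t" "t \<le> g" "g < 1"
  shows "psiE t / t\<^sup>2 \<le> psiE g / g\<^sup>2"
proof (rule DERIV_nonneg_imp_nondecreasing[OF assms(2)])
  fix x :: real assume x: "t \<le> x" "x \<le> g"
  then have x1: "x < 1" "0 < x" using assms by auto
  have "DERIV (\<lambda>x. psiE x / x\<^sup>2) x :> ((-(-1/(1-x)) - 1) * x\<^sup>2 - psiE x * (2*x)) / (x\<^sup>2)\<^sup>2"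
    unfolding psiE_def using x1 by (auto intro!: derivative_eq_intros simp: field_simps power2_eq_square)
  moreover have "((-(-1/(1-x)) - 1) * x\<^sup>2 - psiE x * (2*x)) / (x\<^sup>2)\<^sup>2
     = (x\<^sup>2/(1-x) + 2 * ln (1-x) + 2*x) / x^3"
    using x1 unfolding psiE_def by (auto simp: field_simps power2_eq_square power3_eq_cube)
  moreover have "0 \<le> (x\<^sup>2/(1-x) + 2 * ln (1-x) + 2*x) / x^3"
    using m_nonneg[of x] x1 by auto
  ultimately show "\<exists>y. DERIV (\<lambda>x. psiE x / x\<^sup>2) x :> y \<and> y \<ge> 0" by metis
qed

lemma psi_nonneg: fixes t :: real assumes "0 \<le> t" "t < 1" shows "0 \<le> psiE t"
  using ln_le_minus_one[of "1-t"] assms unfolding psiE_def by auto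

lemma psi_bound:
  fixes t g :: real assumes "0 \<le> t" "t \<le> g" "g < 1"
  shows "psiE t \<le> t\<^sup>2 * (psiE g / g\<^sup>2)"
proof (cases "t = 0")
  case True then show ?thesis by (simp add: psiE_def)
next
  case False
  then have "psiE t / t\<^sup>2 \<le> psiE g / g\<^sup>2" using psi_ratio_mono assms by auto
  then show ?thesis using False by (simp add: field_simps)
qed


lemma part1:
  fixes M :: "'a measure" and X :: "'a \<Rightarrow> real" and \<mu> :: real
  assumes "prob_space M"
    and "X \<in> borel_measurable M"
    and "AE x in M. X x \<in> {0..1}"
    and "prob_space.expectation M X = \<mu>"
    and "0 < \<mu>" and "\<mu> < 1"
  shows "prob_space.expectation M (\<lambda>x. psiE \<bar>X x - \<mu>\<bar>)
           \<le> prob_space.variance M X * (psiE (gmu \<mu>) / (gmu \<mu>)\<^sup>2)"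
proof -
  interpret prob_space M by fact
  define c where "c = psiE (gmu \<mu>) / (gmu \<mu>)\<^sup>2"
  have g: "0 < gmu \<mu>" "gmu \<mu> < 1" using assms by (auto simp: gmu_def)
  have c0: "0 \<le> c" unfolding c_def using psi_nonneg[of "gmu \<mu>"] g by auto
  have bnd: "AE x in M. psiE \<bar>X x - \<mu>\<bar> \<le> (X x - \<mu>)\<^sup>2 * c"
    using assms(3)
  proof eventually_elim
    case (elim x)
    have "psiE \<bar>X x - \<mu>\<bar> \<le> \<bar>X x - \<mu>\<bar>\<^sup>2 * c"
      unfolding c_def by (rule psi_bound) (use elim g in \<open>auto simp: gmu_def\<close>)
    then show ?case by simp
  qed
  have nn: "AE x in M. 0 \<le> psiE \<bar>X x - \<mu>\<bar>"
    using assms(3)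
  proof eventually_elim
    case (elim x)
    show ?case by (rule psi_nonneg) (use elim g in \<open>auto simp: gmu_def\<close>)
  qed
  have sq1: "AE x in M. (X x - \<mu>)\<^sup>2 \<le> 1"
    using assms(3)
  proof eventually_elim
    case (elim x)
    then have "\<bar>X x - \<mu>\<bar> \<le> 1" using assms by auto
    then show ?case by (simp add: abs_square_le_1)
  qed
  have m1: "(\<lambda>x. (X x - \<mu>)\<^sup>2) \<in> borel_measurable M" using assms(2) by measurable
  have m2: "(\<lambda>x. psiE \<bar>X x - \<mu>\<bar>) \<in> borel_measurable M" unfolding psiE_def using assms(2) by measurable
  have i1: "integrable M (\<lambda>x. (X x - \<mu>)\<^sup>2)"
    by (rule integrable_const_bound[where B=1]) (use sq1 m1 in auto)
  have i2: "integrable M (\<lambda>x. psiE \<bar>X x - \<mu>\<bar>)"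
  proof (rule integrable_const_bound[where B=c])
    show "AE x in M. norm (psiE \<bar>X x - \<mu>\<bar>) \<le> c"
      using bnd nn sq1
    proof eventually_elim
      case (elim x)
      have "(X x - \<mu>)\<^sup>2 * c \<le> 1 * c" using elim c0 by (intro mult_right_mono) auto
      then show ?case using elim by auto
    qed
  qed (rule m2)
  have "expectation (\<lambda>x. psiE \<bar>X x - \<mu>\<bar>) \<le> expectation (\<lambda>x. (X x - \<mu>)\<^sup>2 * c)"
    by (rule integral_mono_AE) (use i1 i2 bnd in auto)
  also have "\<dots> = variance X * c" using assms(4) by simp
  finally show ?thesis unfolding c_def .
qed

lemma arith_id:
  fixes A B p g :: real assumes "0 < p" "p < 1" "0 < g"
  shows "(A * p + B * (1 - p)) / (p * g\<^sup>2 / (1 - p))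
        = (1 - p) * (A / g\<^sup>2) + B * (1 - p)\<^sup>2 / (p * g\<^sup>2)"
  using assms by (simp add: field_simps power2_eq_square)

lemma two_point:
  fixes \<nu> p :: real
  assumes nu: "0 < \<nu>" "\<nu> < 1" and p: "0 < p" "p \<le> min \<nu> (1 - \<nu>)"
  shows "\<exists>(N :: real measure) (Y :: real \<Rightarrow> real).
           prob_space N \<and> Y \<in> borel_measurable N \<and>
           (AE x in N. Y x \<in> {0..1}) \<and>
           prob_space.expectation N Y = \<nu> \<and>
           prob_space.variance N Y > 0 \<and>
           (1 - p) * (psiE (gmu \<nu>) / (gmu \<nu>)\<^sup>2) \<le>
             prob_space.expectation N (\<lambda>x. psiE \<bar>Y x - \<nu>\<bar>) / prob_space.variance N Y"
proof -
  define e :: real where "e = (if 1/2 \<le> \<nu> then 0 else 1)"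
  define g where "g = gmu \<nu>"
  define b where "b = (\<nu> - p * e) / (1 - p)"
  define d where "d = p * g / (1 - p)"
  have p1: "p < 1" "p \<le> 1/2" using p by auto
  have g: "g = \<bar>e - \<nu>\<bar>" "0 < g" "g < 1" using nu by (auto simp: g_def gmu_def e_def)
  have b: "0 \<le> b" "b \<le> 1" using nu p p1 by (auto simp: b_def e_def field_simps)
  have bnu: "b - \<nu> = p * (\<nu> - e) / (1 - p)" using p1 by (simp add: b_def field_simps)
  have dabs: "\<bar>b - \<nu>\<bar> = d" using p p1 g(1) unfolding bnu d_def by (simp add: abs_mult)
  have d: "0 \<le> d" "d < 1"
  proof -
    show "0 \<le> d" using p p1 g by (simp add: d_def)
    have "p / (1 - p) \<le> 1" using p p1 by (simp add: field_simps)
    then have "p / (1 - p) * g \<le> 1 * g" using g by (intro mult_right_mono) auto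
    then show "d < 1" using g by (simp add: d_def)
  qed
  define q where "q = map_pmf (\<lambda>t. if t then e else b) (bernoulli_pmf p)"
  define N where "N = measure_pmf q"
  have ps: "prob_space N" unfolding N_def by (rule prob_space_measure_pmf)
  have meas: "(\<lambda>x. x) \<in> borel_measurable N" unfolding N_def by simp
  have ae: "AE x in N. x \<in> {0..1}"
    unfolding N_def q_def using b p p1 by (auto simp: AE_measure_pmf_iff e_def)
  have int: "\<And>f. integral\<^sup>L N f = f e * p + f b * (1 - p)"
    unfolding N_def q_def using p p1 by simp
  have ex: "integral\<^sup>L N (\<lambda>x. x) = \<nu>" unfolding int using p1 by (simp add: b_def field_simps)
  have var: "integral\<^sup>L N (\<lambda>x. (x - integral\<^sup>L N (\<lambda>x. x))\<^sup>2) = p * g\<^sup>2 / (1 - p)"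
  proof -
    have f1: "(e - \<nu>)\<^sup>2 = g\<^sup>2" using g by simp
    have f2: "(b - \<nu>)\<^sup>2 = d\<^sup>2" using dabs by (metis power2_abs)
    have f3: "d\<^sup>2 * (1 - p) = p\<^sup>2 * g\<^sup>2 / (1 - p)"
      using p1 by (simp add: d_def power_divide power_mult_distrib power2_eq_square)
    have f4: "g\<^sup>2 * p + p\<^sup>2 * g\<^sup>2 / (1 - p) = p * g\<^sup>2 / (1 - p)"
    proof -
      have ne: "1 - p \<noteq> 0" using p1 by auto
      show ?thesis using ne by (simp add: divide_simps) algebra
    qed
    have "(e - \<nu>)\<^sup>2 * p + (b - \<nu>)\<^sup>2 * (1 - p) = p * g\<^sup>2 / (1 - p)"
      unfolding f1 f2 f3 f4 by (rule refl)
    then show ?thesis unfolding ex using int[of "\<lambda>x. (x - \<nu>)\<^sup>2"] by simp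
  qed
  have vpos: "p * g\<^sup>2 / (1 - p) > 0" using p p1 g by simp
  have epsi: "integral\<^sup>L N (\<lambda>x. psiE \<bar>x - \<nu>\<bar>) = psiE g * p + psiE d * (1 - p)"
    unfolding int using g dabs by simp
  have pd: "0 \<le> psiE d" using psi_nonneg d by auto
  have "(1 - p) * (psiE g / g\<^sup>2) \<le> (psiE g * p + psiE d * (1 - p)) / (p * g\<^sup>2 / (1 - p))"
  proof -
    have "(psiE g * p + psiE d * (1 - p)) / (p * g\<^sup>2 / (1 - p))
        = (1 - p) * (psiE g / g\<^sup>2) + psiE d * (1 - p)\<^sup>2 / (p * g\<^sup>2)"
      by (rule arith_id[OF p(1) p1(1) g(2)])
    moreover have "0 \<le> psiE d * (1 - p)\<^sup>2 / (p * g\<^sup>2)" using pd p by simp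
    ultimately show ?thesis by linarith
  qed
  then show ?thesis
    apply (intro exI[of _ N] exI[of _ "\<lambda>x. x"])
    using ps meas ae ex var vpos epsi unfolding g_def by simp
qed

lemma eps_le:
  fixes c y \<delta> :: real
  assumes "0 < \<delta>" "\<And>p. 0 < p \<Longrightarrow> p \<le> \<delta> \<Longrightarrow> (1 - p) * c \<le> y"
  shows "c \<le> y"
proof (rule ccontr)
  assume "\<not> c \<le> y"
  then have cy: "y < c" by simp
  have c0: "0 < c" using cy assms(2)[of \<delta>] assms(1)
    by (smt (verit, best) mult_le_cancel_right1)
  define p where "p = min \<delta> ((c - y) / (2 * c))"
  have "0 < (c - y) / (2 * c)" using cy c0 by (intro divide_pos_pos) auto
  then have p0: "0 < p" "p \<le> \<delta>" using assms(1) unfolding p_def by auto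
  have "p * c \<le> (c - y) / (2 * c) * c" using c0 by (intro mult_right_mono) (auto simp: p_def)
  then have "p * c \<le> (c - y) / 2" using c0 by simp
  then show False using assms(2)[OF p0] cy by (simp add: algebra_simps)
qed

lemma part2:
  fixes \<nu> :: real assumes nu: "0 < \<nu>" "\<nu> < 1"
  shows "Sup { prob_space.expectation N (\<lambda>x. psiE \<bar>Y x - \<nu>\<bar>) / prob_space.variance N Y
                   | (N :: real measure) (Y :: real \<Rightarrow> real).
                     prob_space N \<and> Y \<in> borel_measurable N \<and>
                     (AE x in N. Y x \<in> {0..1}) \<and>
                     prob_space.expectation N Y = \<nu> \<and>
                     prob_space.variance N Y > 0 }
              = psiE (gmu \<nu>) / (gmu \<nu>)\<^sup>2" (is "Sup ?S = ?c")
proof (rule cSup_eq_non_empty)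
  have mem: "\<exists>z\<in>?S. (1 - p) * ?c \<le> z" if "0 < p" "p \<le> min \<nu> (1 - \<nu>)" for p
    using two_point[OF nu that] by blast
  show "?S \<noteq> {}" using mem[of "min \<nu> (1 - \<nu>)"] nu by auto
  show "z \<le> ?c" if "z \<in> ?S" for z
  proof -
    obtain N :: "real measure" and Y where h: "prob_space N" "Y \<in> borel_measurable N"
      "AE x in N. Y x \<in> {0..1}" "prob_space.expectation N Y = \<nu>" "prob_space.variance N Y > 0"
      and z: "z = prob_space.expectation N (\<lambda>x. psiE \<bar>Y x - \<nu>\<bar>) / prob_space.variance N Y"
      using \<open>z \<in> ?S\<close> by blast
    have "prob_space.expectation N (\<lambda>x. psiE \<bar>Y x - \<nu>\<bar>) \<le> prob_space.variance N Y * ?c"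
      by (rule part1) (use h nu in auto)
    then show ?thesis unfolding z using h(5) by (simp add: pos_divide_le_eq mult.commute)
  qed
  show "?c \<le> y" if ub: "\<And>z. z \<in> ?S \<Longrightarrow> z \<le> y" for y
  proof -
    have b: "(1 - p) * ?c \<le> y" if "0 < p" "p \<le> min \<nu> (1 - \<nu>)" for p
      using mem[OF that] ub by force
    show ?thesis by (rule eps_le[OF _ b, of "min \<nu> (1 - \<nu>)"]) (use nu in auto)
  qed
qed

theorem mainTheorem17:
  fixes M :: "'a measure" and X :: "'a \<Rightarrow> real" and \<mu> :: real
  assumes "prob_space M"
    and "X \<in> borel_measurable M"
    and "AE x in M. X x \<in> {0..1}"
    and "prob_space.expectation M X = \<mu>"
    and "0 < \<mu>" and "\<mu> < 1"
  shows "prob_space.expectation M (\<lambda>x. psiE \<bar>X x - \<mu>\<bar>)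
           \<le> prob_space.variance M X * (psiE (gmu \<mu>) / (gmu \<mu>)\<^sup>2)
         \<and> (\<forall>\<nu>::real. 0 < \<nu> \<and> \<nu> < 1 \<longrightarrow>
              Sup { prob_space.expectation N (\<lambda>x. psiE \<bar>Y x - \<nu>\<bar>) / prob_space.variance N Y
                   | (N :: real measure) (Y :: real \<Rightarrow> real).
                     prob_space N \<and> Y \<in> borel_measurable N \<and>
                     (AE x in N. Y x \<in> {0..1}) \<and>
                     prob_space.expectation N Y = \<nu> \<and>
                     prob_space.variance N Y > 0 }
              = psiE (gmu \<nu>) / (gmu \<nu>)\<^sup>2)"
proof
  show "prob_space.expectation M (\<lambda>x. psiE \<bar>X x - \<mu>\<bar>)
           \<le> prob_space.variance M X * (psiE (gmu \<mu>) / (gmu \<mu>)\<^sup>2)"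
    by (rule part1) (use assms in auto)
next
  show "\<forall>\<nu>::real. 0 < \<nu> \<and> \<nu> < 1 \<longrightarrow>
              Sup { prob_space.expectation N (\<lambda>x. psiE \<bar>Y x - \<nu>\<bar>) / prob_space.variance N Y
                   | (N :: real measure) (Y :: real \<Rightarrow> real).
                     prob_space N \<and> Y \<in> borel_measurable N \<and>
                     (AE x in N. Y x \<in> {0..1}) \<and>
                     prob_space.expectation N Y = \<nu> \<and>
                     prob_space.variance N Y > 0 }
              = psiE (gmu \<nu>) / (gmu \<nu>)\<^sup>2"
    using part2 by blast
qed

end
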